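(* Let $\vec{\mathcal U}\in\Upsilon$ be full and let $\theta,\phi\in L$. Then $\phi\in Bel(\preceq_{\vec{\mathcal U}}*\preceq_{\{\theta\}})$ if and only if $\theta\mid\!\sim_{\vec{\mathcal U}}\phi$.
   Context: $L$ is a propositional language built from a finite set of propositional variables with the connectives $\neg,\wedge,\vee,\rightarrow,\top,\bot$; $W$ is the finite set of propositional worlds. For $\theta\in L$, $S_\theta=\{w\in W\mid w\models\theta\}$; $E\models\phi$ means $\bigcap_{\theta\in E}S_\theta\subseteq S_\phi$; $\models\phi$ means $\emptyset\models\phi$; $E$ is consistent iff $E\not\models\bot$. Sequences: finite sequences $\vec{\mathcal U}=(\mathcal U_0,\ldots,\mathcal U_k)$ of mutually disjoint subsets of $W$ (components may be empty, possibly repeatedly). $\mathrm{rank}^{\vec{\mathcal U}}(\theta)$ is the least $i$ with $\mathcal U_i\cap S_\theta\neq\emptyset$, $\infty$ if none ($i<\infty$ for all integers $i$). $\theta\mid\!\sim_{\vec{\mathcal U}}\phi$ iff $\mathrm{rank}^{\vec{\mathcal U}}(\theta)<\mathrm{rank}^{\vec{\mathcal U}}(\theta\wedge\neg\phi)$ or $\mathrm{rank}^{\vec{\mathcal U}}(\theta)=\infty$. $\vec{\mathcal U}$ is full iff $\bigcup_i\mathcal U_i=W$, empty iff $\bigcup_i\mathcal U_i=\emptyset$; $\Upsilon$ is the set of sequences which are full or empty. For $\vec{\mathcal U}\in\Upsilon$, $\theta\preceq_{\vec{\mathcal U}}\phi$ iff (not $\neg\theta\vee\neg\phi\mid\!\sim_{\vec{\mathcal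 U}}\theta$) or $\neg\phi\mid\!\sim_{\vec{\mathcal U}}\bot$. E-relation: a relation $\preceq\subseteq L\times L$ such that for all $\theta,\phi,\psi$: (E1) transitivity; (E2) $\theta\models\phi$ implies $\theta\preceq\phi$; (E3) $\theta\preceq\theta\wedge\phi$ or $\phi\preceq\theta\wedge\phi$; (E4) if $\bot\prec\psi$ for some $\psi$, then $\theta\preceq\phi$ for all $\theta$ implies $\models\phi$; $\prec$ is the strict part. Belief set: $Bel(\preceq)=\{\theta\mid\bot\prec\theta\}$ if $\bot\prec\theta$ for some $\theta$, and $Bel(\preceq)=L$ otherwise. Sequence revision: for $\vec{\mathcal U}=(\mathcal U_0,\ldots,\mathcal U_k)$, $\vec{\mathcal V}=(\mathcal V_0,\ldots,\mathcal V_m)$ in $\Upsilon$, if $\vec{\mathcal U}$ is full then $\vec{\mathcal U}*\vec{\mathcal V}=(\mathcal U_0\cap\mathcal V_0,\ldots,\mathcal U_k\cap\mathcal V_0,\ \ldots,\ \mathcal U_0\cap\mathcal V_m,\ldots,\mathcal U_k\cap\mathcal V_m)$; otherwise $\vec{\mathcal U}*\vec{\mathcal V}=\vec{\mathcal V}$. Revision of E-relations: every E-relation equals $\preceq_{\vec{\mathcal U}}$ for some $\vec{\mathcal U}\in\Upsilon$, and $\preceq_K*\preceq_E:=\preceq_{\vec{\mathcal U}*\vec{\mathcal V}}$ for any $\vec{\mathcal U},\vec{\mathcal V}\in\Upsilon$ with $\preceq_K=\preceq_{\vec{\mathcal U}}$, $\preceq_E=\preceq_{\vec{\mathcal V}}$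 (independent of the choice). Relation generated by a set $E\subseteq L$: $\theta\prec_E\phi$ iff $E\not\models\bot$, $\not\models\theta$, and for every $E'\subseteq E$ with $E'\cup\{\neg\phi\}$ consistent there is $E''\subseteq E$ with $|E'|<|E''|$ and $E''\cup\{\neg\theta\}$ consistent; $\theta\preceq_E\phi$ iff not $\phi\prec_E\theta$. (For finite $E$, $\preceq_E$ is an E-relation.) In particular $\preceq_{\{\theta\}}$ is this relation for $E=\{\theta\}$. *)

theory Defs
  imports Main "HOL-Library.Extended_Nat"
begin

datatype 'v form =
    Var 'v
  | Neg "'v form"
  | Conj "'v form" "'v form"
  | Disj "'v form" "'v form"
  | Imp "'v form" "'v form"
  | Top
  | Bot

text \<open>Worlds are valuations 'v \<Rightarrow> bool; W = UNIV (finite when 'v is finite).\<close>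

fun sat :: "('v \<Rightarrow> bool) \<Rightarrow> 'v form \<Rightarrow> bool" where
  "sat w (Var p) = w p"
| "sat w (Neg a) = (\<not> sat w a)"
| "sat w (Conj a b) = (sat w a \<and> sat w b)"
| "sat w (Disj a b) = (sat w a \<or> sat w b)"
| "sat w (Imp a b) = (sat w a \<longrightarrow> sat w b)"
| "sat w Top = True"
| "sat w Bot = False"

definition models :: "'v form \<Rightarrow> ('v \<Rightarrow> bool) set" where
  "models a = {w. sat w a}"

definition entails :: "'v form set \<Rightarrow> 'v form \<Rightarrow> bool" where
  "entails E a \<longleftrightarrow> (\<Inter>t\<in>E. models t) \<subseteq> models a"

definition valid :: "'v form \<Rightarrow> bool" where
  "valid a \<longleftrightarrow> entails {} a"

definition consistent :: "'v form set \<Rightarrow> bool" where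
  "consistent E \<longleftrightarrow> \<not> entails E Bot"

type_synonym 'v seq = "('v \<Rightarrow> bool) set list"

definition is_seq :: "'v seq \<Rightarrow> bool" where
  "is_seq U \<longleftrightarrow> U \<noteq> [] \<and>
     (\<forall>i j. i < length U \<and> j < length U \<and> i \<noteq> j \<longrightarrow> U ! i \<inter> U ! j = {})"

definition full :: "'v seq \<Rightarrow> bool" where
  "full U \<longleftrightarrow> \<Union>(set U) = UNIV"

definition empty_seq :: "'v seq \<Rightarrow> bool" where
  "empty_seq U \<longleftrightarrow> \<Union>(set U) = {}"

definition Upsilon :: "'v seq set" where
  "Upsilon = {U. is_seq U \<and> (full U \<or> empty_seq U)}"

definition rank :: "'v seq \<Rightarrow> 'v form \<Rightarrow> enat" where
  "rank U a = (if \<exists>i<length U. U ! i \<inter> models a \<noteq> {}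
               then enat (LEAST i. i < length U \<and> U ! i \<inter> models a \<noteq> {})
               else \<infinity>)"

definition nm_cons :: "'v seq \<Rightarrow> 'v form \<Rightarrow> 'v form \<Rightarrow> bool" where
  "nm_cons U a b \<longleftrightarrow> rank U a < rank U (Conj a (Neg b)) \<or> rank U a = \<infinity>"

type_synonym 'v rel = "'v form \<Rightarrow> 'v form \<Rightarrow> bool"

definition seq_rel :: "'v seq \<Rightarrow> 'v rel" where
  "seq_rel U a b \<longleftrightarrow> (\<not> nm_cons U (Disj (Neg a) (Neg b)) a) \<or> nm_cons U (Neg b) Bot"

definition strict :: "'v rel \<Rightarrow> 'v rel" where
  "strict R a b \<longleftrightarrow> R a b \<and> \<not> R b a"

definition Bel :: "'v rel \<Rightarrow> 'v form set" where
  "Bel R = (if \<exists>t. strict R Bot t then {t. strict R Bot t} else UNIV)"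

definition seq_rev :: "'v seq \<Rightarrow> 'v seq \<Rightarrow> 'v seq" where
  "seq_rev U V = (if full U then concat (map (\<lambda>Vj. map (\<lambda>Ui. Ui \<inter> Vj) U) V) else V)"

definition rel_rev :: "'v rel \<Rightarrow> 'v rel \<Rightarrow> 'v rel" where
  "rel_rev K E = seq_rel (seq_rev (SOME U. U \<in> Upsilon \<and> seq_rel U = K)
                                  (SOME V. V \<in> Upsilon \<and> seq_rel V = E))"

definition gen_strict :: "'v form set \<Rightarrow> 'v rel" where
  "gen_strict E a b \<longleftrightarrow> consistent E \<and> \<not> valid a \<and>
     (\<forall>E'. E' \<subseteq> E \<and> consistent (E' \<union> {Neg b}) \<longrightarrow>
        (\<exists>E''. E'' \<subseteq> E \<and> card E' < card E'' \<and> consistent (E'' \<union> {Neg a})))"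

definition gen_rel :: "'v form set \<Rightarrow> 'v rel" where
  "gen_rel E a b \<longleftrightarrow> \<not> gen_strict E b a"

end

theory Submission imports Defs begin

lemma models_simps[simp]:
  "models (Neg a) = - models a" "models (Conj a b) = models a \<inter> models b"
  "models (Disj a b) = models a \<union> models b" "models Top = UNIV" "models Bot = {}"
  by (auto simp: models_def)

definition rk :: "'v seq \<Rightarrow> ('v \<Rightarrow> bool) set \<Rightarrow> enat" where
  "rk S X = (if \<exists>i<length S. S ! i \<inter> X \<noteq> {}
               then enat (LEAST i. i < length S \<and> S ! i \<inter> X \<noteq> {}) else \<infinity>)"

lemma rank_rk: "rank S a = rk S (models a)"
  by (simp add: rank_def rk_def)

lemma rk_le: "rk S X \<le> e \<longleftrightarrow> e = \<infinity> \<or> (\<exists>i<length S. S ! i \<inter> X \<noteq> {} \<and> enat i \<le> e)"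
proof
  assume h: "rk S X \<le> e"
  show "e = \<infinity> \<or> (\<exists>i<length S. S ! i \<inter> X \<noteq> {} \<and> enat i \<le> e)"
  proof (cases "\<exists>i<length S. S ! i \<inter> X \<noteq> {}")
    case True
    let ?l = "LEAST i. i < length S \<and> S ! i \<inter> X \<noteq> {}"
    have "?l < length S \<and> S ! ?l \<inter> X \<noteq> {}" using True by (metis (mono_tags, lifting) LeastI)
    moreover have "enat ?l \<le> e" using h True by (simp add: rk_def)
    ultimately show ?thesis by blast
  next
    case False
    then have "rk S X = \<infinity>" by (simp add: rk_def)
    then show ?thesis using h by simp
  qed
next
  assume "e = \<infinity> \<or> (\<exists>i<length S. S ! i \<inter> X \<noteq> {} \<and> enat i \<le> e)"
  moreover have "rk S X \<le> e" if "e = \<infinity>" using that by simp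
  moreover have "rk S X \<le> e" if "\<exists>i<length S. S ! i \<inter> X \<noteq> {} \<and> enat i \<le> e"
  proof -
  from that obtain i where i: "i<length S" "S ! i \<inter> X \<noteq> {}" "enat i \<le> e" by blast
  let ?l = "LEAST i. i < length S \<and> S ! i \<inter> X \<noteq> {}"
  have "?l \<le> i" using i by (intro Least_le) simp
  then have "enat ?l \<le> e" using i(3) by (meson enat_ord_simps(1) order_trans)
  then show "rk S X \<le> e" using i by (auto simp: rk_def)
  qed
  ultimately show "rk S X \<le> e" by blast
qed

lemma rk_enatD: assumes "rk S X = enat n"
  shows "n < length S" "S ! n \<inter> X \<noteq> {}" "\<And>m. m < n \<Longrightarrow> S ! m \<inter> X = {}"
proof -
  have ex: "\<exists>i<length S. S ! i \<inter> X \<noteq> {}" using assms by (auto simp: rk_def split: if_splits)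
  then have n: "n = (LEAST i. i < length S \<and> S ! i \<inter> X \<noteq> {})" using assms by (simp add: rk_def)
  show "n < length S" "S ! n \<inter> X \<noteq> {}" unfolding n using ex by (metis (mono_tags, lifting) LeastI)+
  fix m assume "m < n"
  then show "S ! m \<inter> X = {}" unfolding n
    by (metis (mono_tags, lifting) less_trans not_less_Least LeastI ex)
qed

lemma rk_eq: assumes "n < length S" "S ! n \<inter> X \<noteq> {}" "\<And>m. m < n \<Longrightarrow> S ! m \<inter> X = {}"
  shows "rk S X = enat n"
proof -
  have ex: "\<exists>i<length S. S ! i \<inter> X \<noteq> {}" using assms by blast
  have "(LEAST i. i < length S \<and> S ! i \<inter> X \<noteq> {}) = n"
    using assms by (intro Least_equality) (auto simp: not_less[symmetric])
  then show ?thesis using ex by (simp add: rk_def)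
qed

lemma rk_gt: assumes "\<And>m. m < n \<Longrightarrow> S ! m \<inter> X = {}"
  shows "enat n < rk S X \<longleftrightarrow> \<not> (n < length S \<and> S ! n \<inter> X \<noteq> {})"
proof -
  have "enat n < rk S X \<longleftrightarrow> \<not> rk S X \<le> enat n" by auto
  also have "\<dots> \<longleftrightarrow> \<not> (n < length S \<and> S ! n \<inter> X \<noteq> {})"
    unfolding rk_le
  proof (intro iffI notI)
    assume "\<not> (enat n = \<infinity> \<or> (\<exists>i<length S. S ! i \<inter> X \<noteq> {} \<and> enat i \<le> enat n))"
      "n < length S \<and> S ! n \<inter> X \<noteq> {}"
    then show False by auto
  next
    assume a: "\<not> (n < length S \<and> S ! n \<inter> X \<noteq> {})"
       "enat n = \<infinity> \<or> (\<exists>i<length S. S ! i \<inter> X \<noteq> {} \<and> enat i \<le> enat n)"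
    then obtain i where i: "i<length S" "S ! i \<inter> X \<noteq> {}" "i \<le> n" by auto
    show False
    proof (cases "i < n")
      case True then show ?thesis using assms i by blast
    next
      case False then have "i = n" using i by simp
      then show ?thesis using a i by blast
    qed
  qed
  finally show ?thesis .
qed

lemma rk_empty[simp]: "rk S {} = \<infinity>" by (simp add: rk_def)

lemma rk_union: "rk S (X \<union> Y) = min (rk S X) (rk S Y)"
proof -
  have "\<And>e. rk S (X \<union> Y) \<le> e \<longleftrightarrow> min (rk S X) (rk S Y) \<le> e"
    unfolding min_le_iff_disj rk_le by blast
  then show ?thesis by (metis order_antisym order_refl)
qed

lemma seq_rel_iff: "seq_rel S a b \<longleftrightarrow> rk S (- models a) \<le> rk S (- models b)"
  unfolding seq_rel_def nm_cons_def rank_rk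
  by (cases "rk S (-models a)"; cases "rk S (-models b)") (auto simp: rk_union Int_absorb1 min_def)

lemma nm_cons_iff: "nm_cons S a b \<longleftrightarrow> rk S (models a) < rk S (models a \<inter> - models b) \<or> rk S (models a) = \<infinity>"
  unfolding nm_cons_def rank_rk by simp

lemma nm_cons_seq_rel: "nm_cons S a b \<longleftrightarrow> \<not> seq_rel S (Neg (Conj a (Neg b))) (Neg a) \<or> seq_rel S (Neg Bot) (Neg a)"
  unfolding nm_cons_iff seq_rel_iff by (auto simp: not_le)

lemma gen_strict_iff: "gen_strict {t} a b \<longleftrightarrow> models t \<noteq> {} \<and> models a \<noteq> UNIV \<and>
   (models b \<noteq> UNIV \<longrightarrow> models t \<inter> - models a \<noteq> {}) \<and> models t \<subseteq> models b"
proof -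
  have sub: "E' \<subseteq> {t} \<longleftrightarrow> E' = {} \<or> E' = {t}" for E' :: "'a form set" by blast
  show ?thesis
    unfolding gen_strict_def sub consistent_def entails_def valid_def
    by (auto simp: Ball_def)
qed


lemma concat_len: assumes "\<forall>x\<in>set xs. length (f x) = k"
  shows "length (concat (map f xs)) = length xs * k"
  using assms by (induction xs) auto

lemma concat_nth: assumes "\<forall>x\<in>set xs. length (f x) = k" "n < length xs * k"
  shows "concat (map f xs) ! n = f (xs ! (n div k)) ! (n mod k)"
  using assms
proof (induction xs arbitrary: n)
  case Nil then show ?case by simp
next
  case (Cons x xs)
  have lx: "length (f x) = k" using Cons.prems by simp
  have kpos: "0 < k" using Cons.prems(2) by (cases k) auto
  show ?case
  proof (cases "n < k")
    case True
    then show ?thesis using lx by (simp add: nth_append)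
  next
    case False
    have "n - k < length xs * k" using Cons.prems(2) False by simp
    then have ih: "concat (map f xs) ! (n - k) = f (xs ! ((n-k) div k)) ! ((n-k) mod k)"
      using Cons by simp
    have d: "n div k = Suc ((n - k) div k)" using kpos False by (simp add: le_div_geq)
    have m: "n mod k = (n - k) mod k" using False by (simp add: le_mod_geq)
    show ?thesis using False lx ih d m by (simp add: nth_append)
  qed
qed

definition chr :: "'v list \<Rightarrow> ('v \<Rightarrow> bool) \<Rightarrow> 'v form" where
  "chr xs w = foldr (\<lambda>v acc. Conj (if w v then Var v else Neg (Var v)) acc) xs Top"

lemma sat_chr: "sat w' (chr xs w) \<longleftrightarrow> (\<forall>v\<in>set xs. w' v = w v)"
  unfolding chr_def by (induction xs) auto

lemma models_chr: assumes "set xs = UNIV" shows "models (chr xs w) = {w}"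
  using assms by (auto simp: models_def sat_chr)

lemma rk2: "rk [P, Q] X = (if P \<inter> X \<noteq> {} then 0 else if Q \<inter> X \<noteq> {} then 1 else \<infinity>)"
proof -
  have "rk [P, Q] X = 0" if "P \<inter> X \<noteq> {}" using that by (subst rk_eq[of 0]) (auto simp: zero_enat_def)
  moreover have "rk [P, Q] X = 1" if "P \<inter> X = {}" "Q \<inter> X \<noteq> {}"
    using that by (subst rk_eq[of 1]) (auto simp: one_enat_def)
  moreover have "rk [P, Q] X = \<infinity>" if "P \<inter> X = {}" "Q \<inter> X = {}"
    using that by (auto simp: rk_def less_Suc_eq numeral_2_eq_2)
  ultimately show ?thesis by auto
qed

lemma rk_emptyseq: "empty_seq S \<Longrightarrow> rk S X = \<infinity>"
  by (auto simp: rk_def empty_seq_def)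

lemma rk_full: assumes "full S" "X \<noteq> {}" shows "rk S X \<noteq> \<infinity>"
proof -
  obtain x where x: "x \<in> X" using assms by blast
  then have "x \<in> \<Union>(set S)" using assms by (simp add: full_def)
  then obtain i where "i < length S" "x \<in> S ! i" by (auto simp: in_set_conv_nth)
  then have "rk S X \<le> enat i" using x by (subst rk_le) blast
  then show ?thesis by (cases "rk S X") auto
qed

lemma rk2_le: "rk [T, -T] A \<le> rk [T, -T] B \<longleftrightarrow> \<not> (B \<noteq> {} \<and> (A \<noteq> {} \<longrightarrow> T \<inter> B \<noteq> {}) \<and> T \<inter> A = {})"
proof -
  have eA: "A = {} \<longleftrightarrow> T \<inter> A = {} \<and> -T \<inter> A = {}" by blast
  have eB: "B = {} \<longleftrightarrow> T \<inter> B = {} \<and> -T \<inter> B = {}" by blast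
  show ?thesis unfolding eA eB rk2
    by (cases "T \<inter> A = {}"; cases "T \<inter> B = {}"; cases "-T \<inter> A = {}"; cases "-T \<inter> B = {}"; simp)
qed

lemma exV: "\<exists>V. V \<in> Upsilon \<and> seq_rel V = gen_rel {\<theta>}"
proof (cases "models \<theta> = {}")
  case True
  have "[{}] \<in> Upsilon" by (auto simp: Upsilon_def is_seq_def empty_seq_def)
  moreover have "seq_rel [{}] = gen_rel {\<theta>}"
    using True by (auto simp: fun_eq_iff seq_rel_iff gen_rel_def gen_strict_iff rk_def)
  ultimately show ?thesis by blast
next
  case False
  let ?V = "[models \<theta>, - models \<theta>]"
  have "?V \<in> Upsilon" by (auto simp: Upsilon_def is_seq_def full_def less_Suc_eq numeral_2_eq_2)
  moreover have "seq_rel ?V = gen_rel {\<theta>}"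
  proof (intro ext)
    fix a b
    have "seq_rel ?V a b \<longleftrightarrow> \<not> (- models b \<noteq> {} \<and> (- models a \<noteq> {} \<longrightarrow> models \<theta> \<inter> - models b \<noteq> {}) \<and> models \<theta> \<inter> - models a = {})"
      unfolding seq_rel_iff rk2_le ..
    also have "\<dots> \<longleftrightarrow> gen_rel {\<theta>} a b"
      unfolding gen_rel_def gen_strict_iff using False by blast
    finally show "seq_rel ?V a b = gen_rel {\<theta>} a b" .
  qed
  ultimately show ?thesis by blast
qed


theorem proposition9:
  fixes U :: "('v::finite) seq" and \<theta> \<phi> :: "'v form"
  assumes "U \<in> Upsilon" and "full U"
  shows "\<phi> \<in> Bel (rel_rev (seq_rel U) (gen_rel {\<theta>})) \<longleftrightarrow> nm_cons U \<theta> \<phi>"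
proof -
  define U' where "U' = (SOME U'. U' \<in> Upsilon \<and> seq_rel U' = seq_rel U)"
  define V where "V = (SOME V. V \<in> Upsilon \<and> seq_rel V = gen_rel {\<theta>})"
  have U': "U' \<in> Upsilon \<and> seq_rel U' = seq_rel U" unfolding U'_def
    by (rule someI[of _ U]) (simp add: assms)
  have V: "V \<in> Upsilon \<and> seq_rel V = gen_rel {\<theta>}" unfolding V_def
    by (rule someI_ex) (rule exV)
  have rr: "rel_rev (seq_rel U) (gen_rel {\<theta>}) = seq_rel (seq_rev U' V)"
    unfolding rel_rev_def U'_def V_def ..
  have fullU': "full U'"
  proof (rule ccontr)
    assume "\<not> full U'"
    then have "empty_seq U'" using U' by (auto simp: Upsilon_def)
    then have "seq_rel U' Top Bot" by (simp add: seq_rel_iff rk_emptyseq)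
    moreover have "\<not> seq_rel U Top Bot"
      using rk_full[OF assms(2), of UNIV] by (simp add: seq_rel_iff)
    ultimately show False using U' by simp
  qed
  define k where "k = length U'"
  define W where "W = concat (map (\<lambda>Vj. map (\<lambda>Ui. Ui \<inter> Vj) U') V)"
  have kpos: "0 < k" using U' by (auto simp: k_def Upsilon_def is_seq_def)
  have Wdef: "seq_rev U' V = W" using fullU' by (simp add: seq_rev_def W_def)
  have lenW: "length W = length V * k" unfolding W_def k_def by (rule concat_len) simp
  have nthW: "W ! n = U' ! (n mod k) \<inter> V ! (n div k)" if "n < length V * k" for n
    unfolding W_def using concat_nth[of V "\<lambda>Vj. map (\<lambda>Ui. Ui \<inter> Vj) U'" k n] that kpos
    by (simp add: k_def)
  have nmU: "nm_cons U \<theta> \<phi> = nm_cons U' \<theta> \<phi>" by (simp add: nm_cons_seq_rel U')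
  have G: "rk V (- models a) \<le> rk V (- models b) \<longleftrightarrow> \<not> gen_strict {\<theta>} b a" for a b
    using V[THEN conjunct2, THEN fun_cong, THEN fun_cong, of a b] by (simp add: seq_rel_iff gen_rel_def)
  have BelW: "Bel (seq_rel W) = (if \<exists>t. rk W UNIV < rk W (- models t)
      then {t. rk W UNIV < rk W (- models t)} else UNIV)"
  proof -
    have st: "strict (seq_rel W) Bot t \<longleftrightarrow> rk W UNIV < rk W (- models t)" for t
      unfolding strict_def seq_rel_iff by (auto simp: not_le)
    show ?thesis unfolding Bel_def st ..
  qed
  show ?thesis
  proof (cases "models \<theta> = {}")
    case True
    have "rk V {} \<le> rk V UNIV" using G[of Top Bot] True by (simp add: gen_strict_iff)
    then have inf: "rk V UNIV = \<infinity>" by simp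
    have Vj: "V ! j = {}" if "j < length V" for j
    proof (rule ccontr)
      assume "V ! j \<noteq> {}"
      then have "rk V UNIV \<le> enat j" using that by (subst rk_le) auto
      then show False using inf by simp
    qed
    have "W ! n = {}" if "n < length W" for n
    proof -
      have "n div k < length V" using that lenW by (simp add: less_mult_imp_div_less)
      then show ?thesis using nthW[of n] that lenW Vj by simp
    qed
    then have "rk W X = \<infinity>" for X by (auto simp: rk_def)
    then have "\<phi> \<in> Bel (seq_rel W)" unfolding BelW by simp
    moreover have "nm_cons U \<theta> \<phi>" using True by (simp add: nm_cons_iff)
    ultimately show ?thesis using rr Wdef by simp
  next
    case False
    have "\<not> rk V {} \<le> rk V UNIV" using G[of Top Bot] False by (simp add: gen_strict_iff)
    then obtain j0 where j0: "rk V UNIV = enat j0" by (cases "rk V UNIV") auto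
    note j0D = rk_enatD[OF j0]
    obtain xs :: "'v list" where xs: "set xs = UNIV" using finite_list[of "UNIV :: 'v set"] by auto
    have sing: "rk V {w} \<le> enat j0 \<longleftrightarrow> w \<in> models \<theta>" for w
    proof -
      have "rk V {w} \<le> rk V UNIV \<longleftrightarrow> \<not> gen_strict {\<theta>} Bot (Neg (chr xs w))"
        using G[of "Neg (chr xs w)" Bot] by (simp add: models_chr[OF xs])
      also have "gen_strict {\<theta>} Bot (Neg (chr xs w)) \<longleftrightarrow> models \<theta> \<subseteq> - {w}"
        using False by (simp add: gen_strict_iff models_chr[OF xs])
      finally show ?thesis using j0 by auto
    qed
    have Vj0: "V ! j0 = models \<theta>"
    proof (intro equalityI subsetI)
      fix w assume "w \<in> V ! j0"
      then have "rk V {w} \<le> enat j0" using j0D(1) by (subst rk_le) auto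
      then show "w \<in> models \<theta>" using sing by simp
    next
      fix w assume "w \<in> models \<theta>"
      then have "rk V {w} \<le> enat j0" using sing by simp
      then obtain i where i: "i < length V" "V ! i \<inter> {w} \<noteq> {}" "i \<le> j0" by (auto simp: rk_le)
      have "i = j0"
      proof (rule ccontr)
        assume "i \<noteq> j0"
        then have "i < j0" using i by simp
        then show False using j0D(3)[of i] i by auto
      qed
      then show "w \<in> V ! j0" using i by auto
    qed
    have "rk U' (models \<theta>) \<noteq> \<infinity>" using rk_full[OF fullU'] False by simp
    then obtain i1 where i1: "rk U' (models \<theta>) = enat i1" by (cases "rk U' (models \<theta>)") auto
    note i1D = rk_enatD[OF i1]
    define n0 where "n0 = j0 * k + i1"
    have i1k: "i1 < k" using i1D(1) k_def by simp
    have n0len: "n0 < length V * k"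
    proof -
      have "n0 < (j0 + 1) * k" using i1k by (simp add: n0_def)
      also have "\<dots> \<le> length V * k" using j0D(1) by (intro mult_right_mono) auto
      finally show ?thesis .
    qed
    have Wn0: "W ! n0 = U' ! i1 \<inter> models \<theta>"
      using nthW[OF n0len] i1k Vj0 by (simp add: n0_def)
    have before: "W ! m = {}" if "m < n0" for m
    proof -
      have mlen: "m < length V * k" using that n0len by simp
      have md: "m = m div k * k + m mod k" by simp
      have mk: "m mod k < k" using kpos by simp
      have "m div k < j0 + 1"
      proof (rule ccontr)
        assume "\<not> m div k < j0 + 1"
        then have "(j0 + 1) * k \<le> m div k * k" by (intro mult_right_mono) auto
        then show False using that md i1k unfolding n0_def by simp
      qed
      then consider "m div k < j0" | "m div k = j0" by linarith
      then show ?thesis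
      proof cases
        case 1
        then show ?thesis using nthW[OF mlen] j0D(3) by auto
      next
        case 2
        then have "m = j0 * k + m mod k" using md by simp
        then have "m mod k < i1" using that unfolding n0_def by linarith
        then show ?thesis using nthW[OF mlen] 2 i1D(3) Vj0 by auto
      qed
    qed
    have rW: "rk W UNIV = enat n0"
      using Wn0 i1D(2) n0len lenW before by (intro rk_eq) auto
    have ex: "\<exists>t. rk W UNIV < rk W (- models t)" by (rule exI[of _ Top]) (simp add: rW)
    have "\<phi> \<in> Bel (seq_rel W) \<longleftrightarrow> enat n0 < rk W (- models \<phi>)"
      unfolding BelW using ex rW by simp
    also have "\<dots> \<longleftrightarrow> \<not> (n0 < length W \<and> W ! n0 \<inter> - models \<phi> \<noteq> {})"
      using before by (intro rk_gt) auto
    also have "\<dots> \<longleftrightarrow> U' ! i1 \<inter> models \<theta> \<inter> - models \<phi> = {}"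
      using n0len lenW Wn0 by simp
    also have "\<dots> \<longleftrightarrow> \<not> (i1 < length U' \<and> U' ! i1 \<inter> (models \<theta> \<inter> - models \<phi>) \<noteq> {})"
      using i1D(1) by blast
    also have "\<dots> \<longleftrightarrow> enat i1 < rk U' (models \<theta> \<inter> - models \<phi>)"
      using i1D(3) by (intro rk_gt[symmetric]) blast
    also have "\<dots> \<longleftrightarrow> nm_cons U' \<theta> \<phi>" unfolding nm_cons_iff i1 by simp
    finally show ?thesis using rr Wdef nmU by simp
  qed
qed

end
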